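(* Let $d$ be a positive integer and $I$ a nonzero square free monomial ideal of $S=K[x_1,\ldots,x_n]$ generated in degrees $\geq d$ with $\rho_d(I)>0$. The following are equivalent: (1) $\operatorname{sdepth}_S I=d$; (2) there exist square free monomials of degree $d$ in $I$ which generate an ideal $I'$ with $\rho_d(I')>\rho_{d+1}(I')$.
   Context: $K$ is a field; for a monomial ideal $L$, $\rho_k(L)$ denotes the number of square free monomials of degree $k$ belonging to $L$. Stanley depth: let $P_{I}$ be the (finite) poset of all square free monomials in $I$, ordered by divisibility. For a partition $\mathcal P$ of $P_{I}$ into disjoint intervals $[u_i,v_i]=\{w\in P_{I}: u_i\mid w,\ w\mid v_i\}$, set $\operatorname{sdepth}\mathcal P=\min_i\deg v_i$; then $\operatorname{sdepth}_S I=\max_{\mathcal P}\operatorname{sdepth}\mathcal P$, the maximum over all such partitions. *)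

theory Defs
  imports Main
begin

text \<open>A square free monomial x_{i_1}...x_{i_k} of S = K[x_1,...,x_n] is encoded by its support,
  a subset of the variable index set {..<n}; its degree is the cardinality, and divisibility is
  inclusion. A square free monomial ideal is determined by the set of square free monomials it
  contains, an up-closed family of subsets of {..<n}.\<close>

definition sqf_monomials :: "nat \<Rightarrow> nat set set" where
  "sqf_monomials n = Pow {..<n}"

definition sqf_monomial_ideal :: "nat \<Rightarrow> nat set set \<Rightarrow> bool" where
  "sqf_monomial_ideal n P \<longleftrightarrow> P \<subseteq> sqf_monomials n \<and>
     (\<forall>u\<in>P. \<forall>v\<in>sqf_monomials n. u \<subseteq> v \<longrightarrow> v \<in> P)"

definition gen_ideal :: "nat \<Rightarrow> nat set set \<Rightarrow> nat set set" where
  "gen_ideal n G = {v \<in> sqf_monomials n. \<exists>g\<in>G. g \<subseteq> v}"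

definition rho :: "nat set set \<Rightarrow> nat \<Rightarrow> nat" where
  "rho P k = card {u \<in> P. card u = k}"

definition interval :: "nat set set \<Rightarrow> nat set \<Rightarrow> nat set \<Rightarrow> nat set set" where
  "interval P u v = {w \<in> P. u \<subseteq> w \<and> w \<subseteq> v}"

definition interval_partition :: "nat set set \<Rightarrow> (nat set \<times> nat set) set \<Rightarrow> bool" where
  "interval_partition P \<Pi> \<longleftrightarrow> finite \<Pi> \<and>
     (\<forall>(u,v)\<in>\<Pi>. u \<in> P \<and> v \<in> P \<and> u \<subseteq> v) \<and>
     (\<forall>p\<in>\<Pi>. \<forall>q\<in>\<Pi>. p \<noteq> q \<longrightarrow>
        interval P (fst p) (snd p) \<inter> interval P (fst q) (snd q) = {}) \<and>
     (\<Union>(u,v)\<in>\<Pi>. interval P u v) = P"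

definition sdepth_partition :: "(nat set \<times> nat set) set \<Rightarrow> nat" where
  "sdepth_partition \<Pi> = Min ((\<lambda>(u,v). card v) ` \<Pi>)"

definition sdepth :: "nat set set \<Rightarrow> nat" where
  "sdepth P = Max {sdepth_partition \<Pi> | \<Pi>. interval_partition P \<Pi>}"

end

theory Submission
  imports Defs
begin

lemma hall:
  assumes "finite A" "\<forall>a\<in>A. finite (N a)" "\<forall>X\<subseteq>A. card X \<le> card (\<Union>(N ` X))"
  shows "\<exists>f. inj_on f A \<and> (\<forall>a\<in>A. f a \<in> N a)"
  using assms
proof (induction "card A" arbitrary: A N rule: less_induct)
  case less
  show ?case
  proof (cases "A = {}")
    case True then show ?thesis by auto
  next
    case False
    show ?thesis
    proof (cases "\<exists>X. X \<subseteq> A \<and> X \<noteq> {} \<and> X \<noteq> A \<and> card (\<Union>(N`X)) \<le> card X")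
      case True
      then obtain X where X: "X \<subseteq> A" "X \<noteq> {}" "X \<noteq> A" "card (\<Union>(N`X)) \<le> card X" by blast
      have fX: "finite X" using X(1) less.prems(1) finite_subset by blast
      have cX: "card X < card A" using X less.prems(1) by (meson psubsetI psubset_card_mono)
      obtain f1 where f1: "inj_on f1 X" "\<forall>a\<in>X. f1 a \<in> N a"
        using less.hyps[OF cX, of N] less.prems X(1) fX by auto
      define M where "M = \<Union>(N`X)"
      have fM: "finite M" unfolding M_def using fX X(1) less.prems(2) by auto
      have cM: "card M = card X" using X(4) less.prems(3) X(1) unfolding M_def by (meson le_antisym)
      define N2 where "N2 = (\<lambda>a. N a - M)"
      have cA2: "card (A - X) < card A"
        using X less.prems(1) by (metis Diff_subset card_Diff_subset card_gt_0_iff diff_less fX finite_subset subset_empty)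
      have hall2: "\<forall>Y\<subseteq>A-X. card Y \<le> card (\<Union>(N2`Y))"
      proof (intro allI impI)
        fix Y assume Y: "Y \<subseteq> A - X"
        have fY: "finite Y" using Y less.prems(1) finite_subset by blast
        have e: "\<Union>(N`(Y\<union>X)) = \<Union>(N2`Y) \<union> M" by (auto simp: N2_def M_def)
        have disj: "\<Union>(N2`Y) \<inter> M = {}" by (auto simp: N2_def)
        have fin: "finite (\<Union>(N2`Y))" using fY Y less.prems(2) by (auto simp: N2_def)
        have "card Y + card X = card (Y \<union> X)" using fY fX Y by (subst card_Un_disjoint) auto
        also have "\<dots> \<le> card (\<Union>(N`(Y\<union>X)))" using less.prems(3) Y X(1) by (metis Diff_subset Un_subset_iff subset_trans)
        also have "\<dots> = card (\<Union>(N2`Y)) + card M" using e disj fin fM by (simp add: card_Un_disjoint)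
        finally show "card Y \<le> card (\<Union>(N2`Y))" using cM by simp
      qed
      obtain f2 where f2: "inj_on f2 (A-X)" "\<forall>a\<in>A-X. f2 a \<in> N2 a"
        using less.hyps[OF cA2, of N2] less.prems hall2 by (auto simp: N2_def)
      define f where "f = (\<lambda>a. if a\<in>X then f1 a else f2 a)"
      have "inj_on f A"
      proof (rule inj_onI)
        fix a b assume ab: "a \<in> A" "b \<in> A" "f a = f b"
        show "a = b"
        proof (cases "a \<in> X"; cases "b \<in> X")
          assume "a \<in> X" "b \<in> X" then show ?thesis using ab f1(1) by (auto simp: f_def inj_on_def)
        next
          assume "a \<notin> X" "b \<notin> X" then show ?thesis using ab f2(1) by (auto simp: f_def inj_on_def)
        next
          assume "a \<in> X" "b \<notin> X" then show ?thesis using ab f1(2) f2(2) by (auto simp: f_def N2_def M_def)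
        next
          assume "a \<notin> X" "b \<in> X" then show ?thesis using ab f1(2) f2(2) by (simp add: f_def N2_def M_def) (metis DiffI)
        qed
      qed
      moreover have "\<forall>a\<in>A. f a \<in> N a" using f1 f2 by (auto simp: f_def N2_def)
      ultimately show ?thesis by blast
    next
      case False
      then have strict: "\<forall>X. X \<subseteq> A \<and> X \<noteq> {} \<and> X \<noteq> A \<longrightarrow> card X < card (\<Union>(N`X))"
        by (auto simp: not_le)
      obtain a where a: "a \<in> A" using \<open>A \<noteq> {}\<close> by blast
      have "card {a} \<le> card (N a)" using less.prems(3) a by (metis ccpo_Sup_singleton empty_subsetI image_empty image_insert insert_subset)
      then have "N a \<noteq> {}" by auto
      then obtain b where b: "b \<in> N a" by blast
      define N2 where "N2 = (\<lambda>x. N x - {b})"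
      have cA2: "card (A - {a}) < card A" using a less.prems(1) by (metis card_Diff1_less)
      have hall2: "\<forall>Y\<subseteq>A-{a}. card Y \<le> card (\<Union>(N2`Y))"
      proof (intro allI impI)
        fix Y assume Y: "Y \<subseteq> A - {a}"
        show "card Y \<le> card (\<Union>(N2`Y))"
        proof (cases "Y = {}")
          case True then show ?thesis by simp
        next
          case False
          have fY: "finite Y" using Y less.prems(1) finite_subset by blast
          have lt: "card Y < card (\<Union>(N`Y))" using strict Y False a by blast
          have e: "\<Union>(N2`Y) = \<Union>(N`Y) - {b}" by (auto simp: N2_def)
          have fin: "finite (\<Union>(N`Y))" using fY Y less.prems(2) by auto
          show ?thesis unfolding e using lt fin card_Diff_singleton_if[of "\<Union>(N`Y)" b] by (simp split: if_splits)
        qed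
      qed
      obtain f2 where f2: "inj_on f2 (A-{a})" "\<forall>x\<in>A-{a}. f2 x \<in> N2 x"
        using less.hyps[OF cA2, of N2] less.prems hall2 by (auto simp: N2_def)
      define f where "f = f2(a := b)"
      have "inj_on f A"
      proof (rule inj_onI)
        fix x y assume xy: "x \<in> A" "y \<in> A" "f x = f y"
        show "x = y" using xy f2 by (auto simp: f_def N2_def inj_on_def split: if_splits)
      qed
      moreover have "\<forall>x\<in>A. f x \<in> N x" using f2 b by (auto simp: f_def N2_def)
      ultimately show ?thesis by blast
    qed
  qed
qed

context
  fixes n d :: nat and I :: "nat set set"
  assumes ideal: "sqf_monomial_ideal n I" and deg: "\<forall>u\<in>I. d \<le> card u"
begin

lemma I_sub: "I \<subseteq> Pow {..<n}" using ideal by (auto simp: sqf_monomial_ideal_def sqf_monomials_def)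

lemma finI: "finite I" using I_sub finite_subset by blast

lemma fin_mem: "u \<in> I \<Longrightarrow> finite u" using I_sub by (auto intro: finite_subset)

lemma up: "u \<in> I \<Longrightarrow> u \<subseteq> v \<Longrightarrow> v \<subseteq> {..<n} \<Longrightarrow> v \<in> I"
  using ideal by (auto simp: sqf_monomial_ideal_def sqf_monomials_def)

lemma deg_eq: "a \<in> I \<Longrightarrow> u \<in> I \<Longrightarrow> a \<subseteq> u \<Longrightarrow> card u = d \<Longrightarrow> a = u"
  using deg fin_mem by (metis card_seteq)

lemma rho_d_gen:
  assumes "G \<subseteq> {u\<in>I. card u = d}"
  shows "rho (gen_ideal n G) d = card G"
proof -
  have "{u \<in> gen_ideal n G. card u = d} = G"
  proof
    show "{u \<in> gen_ideal n G. card u = d} \<subseteq> G"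
    proof
      fix u assume u: "u \<in> {u \<in> gen_ideal n G. card u = d}"
      then obtain g where g: "g \<in> G" "g \<subseteq> u" and us: "u \<subseteq> {..<n}"
        by (auto simp: gen_ideal_def sqf_monomials_def)
      have "g \<in> I" using g assms by auto
      then have "u \<in> I" using up g us by blast
      then have "u = g" using deg_eq[OF \<open>g \<in> I\<close> \<open>u\<in>I\<close> g(2)] u by auto
      then show "u \<in> G" using g by simp
    qed
    show "G \<subseteq> {u \<in> gen_ideal n G. card u = d}"
      using assms I_sub by (auto simp: gen_ideal_def sqf_monomials_def)
  qed
  then show ?thesis by (simp add: rho_def)
qed

lemma rho_d1_gen:
  assumes "G \<subseteq> {u\<in>I. card u = d}"
  shows "rho (gen_ideal n G) (d+1) = card (\<Union>u\<in>G. {w\<in>I. card w = d+1 \<and> u \<subseteq> w})"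
proof -
  have "{u \<in> gen_ideal n G. card u = d+1} = (\<Union>u\<in>G. {w\<in>I. card w = d+1 \<and> u \<subseteq> w})"
  proof
    show "{u \<in> gen_ideal n G. card u = d+1} \<subseteq> (\<Union>u\<in>G. {w\<in>I. card w = d+1 \<and> u \<subseteq> w})"
    proof
      fix u assume u: "u \<in> {u \<in> gen_ideal n G. card u = d+1}"
      then obtain g where g: "g \<in> G" "g \<subseteq> u" and us: "u \<subseteq> {..<n}"
        by (auto simp: gen_ideal_def sqf_monomials_def)
      have "g \<in> I" using g assms by auto
      then have "u \<in> I" using up g us by blast
      then show "u \<in> (\<Union>u\<in>G. {w\<in>I. card w = d+1 \<and> u \<subseteq> w})" using g u by blast
    qed
    show "(\<Union>u\<in>G. {w\<in>I. card w = d+1 \<and> u \<subseteq> w}) \<subseteq> {u \<in> gen_ideal n G. card u = d+1}"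
      using I_sub by (auto simp: gen_ideal_def sqf_monomials_def)
  qed
  then show ?thesis by (simp add: rho_def)
qed

lemma part_to_hall:
  assumes P: "interval_partition I Pi" and big: "\<forall>(u,v)\<in>Pi. d+1 \<le> card v"
    and G: "G \<subseteq> {u\<in>I. card u = d}"
  shows "card G \<le> card (\<Union>u\<in>G. {w\<in>I. card w = d+1 \<and> u \<subseteq> w})"
proof -
  have ex: "\<exists>w. \<exists>p\<in>Pi. fst p = u \<and> w \<in> interval I u (snd p) \<and> w \<in> {w\<in>I. card w = d+1 \<and> u \<subseteq> w}"
    if u: "u \<in> I" "card u = d" for u
  proof -
    have "u \<in> (\<Union>(a,b)\<in>Pi. interval I a b)" using P u by (simp add: interval_partition_def)
    then obtain a b where ab: "(a,b) \<in> Pi" "u \<in> interval I a b" by blast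
    have abI: "a \<in> I" "b \<in> I" "a \<subseteq> b" using P ab(1) by (auto simp: interval_partition_def)
    have "a \<subseteq> u" "u \<subseteq> b" using ab(2) by (auto simp: interval_def)
    then have au: "a = u" using deg_eq abI u by blast
    have cb: "d+1 \<le> card b" using big ab(1) by auto
    have "\<not> b \<subseteq> u"
    proof
      assume "b \<subseteq> u" then have "card b \<le> card u" using fin_mem u(1) card_mono by blast
      then show False using cb u by simp
    qed
    then obtain x where x: "x \<in> b" "x \<notin> u" by blast
    define w where "w = insert x u"
    have wb: "w \<subseteq> b" using x \<open>u \<subseteq> b\<close> by (auto simp: w_def)
    have "b \<subseteq> {..<n}" using abI I_sub by auto
    then have wI: "w \<in> I" using up[OF u(1), of w] wb by (auto simp: w_def)
    have cw: "card w = d+1" using x fin_mem[OF u(1)] u by (simp add: w_def)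
    show ?thesis
      apply (rule exI[of _ w], rule bexI[of _ "(a,b)"])
      using au wI wb cw ab(1) by (auto simp: interval_def w_def)
  qed
  define h where "h = (\<lambda>u. SOME w. \<exists>p\<in>Pi. fst p = u \<and> w \<in> interval I u (snd p) \<and> w \<in> {w\<in>I. card w = d+1 \<and> u \<subseteq> w})"
  have hP: "\<exists>p\<in>Pi. fst p = u \<and> h u \<in> interval I u (snd p) \<and> h u \<in> {w\<in>I. card w = d+1 \<and> u \<subseteq> w}"
    if "u \<in> G" for u
  proof -
    have "u \<in> I" "card u = d" using that G by auto
    from ex[OF this] show ?thesis unfolding h_def by (rule someI_ex)
  qed
  have inj: "inj_on h G"
  proof (rule inj_onI)
    fix u u' assume uu: "u \<in> G" "u' \<in> G" "h u = h u'"
    obtain p where p: "p \<in> Pi" "fst p = u" "h u \<in> interval I u (snd p)" using hP uu(1) by blast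
    obtain q where q: "q \<in> Pi" "fst q = u'" "h u' \<in> interval I u' (snd q)" using hP uu(2) by blast
    have "p = q"
    proof (rule ccontr)
      assume "p \<noteq> q"
      then have "interval I (fst p) (snd p) \<inter> interval I (fst q) (snd q) = {}"
        using P p(1) q(1) unfolding interval_partition_def by blast
      then show False using p q uu(3) by auto
    qed
    then show "u = u'" using p q by simp
  qed
  have sub: "h ` G \<subseteq> (\<Union>u\<in>G. {w\<in>I. card w = d+1 \<and> u \<subseteq> w})" using hP by blast
  have fin: "finite (\<Union>u\<in>G. {w\<in>I. card w = d+1 \<and> u \<subseteq> w})" using finI by (auto intro: finite_subset)
  have "card G = card (h ` G)" using inj by (simp add: card_image)
  also have "\<dots> \<le> card (\<Union>u\<in>G. {w\<in>I. card w = d+1 \<and> u \<subseteq> w})" using sub fin card_mono by blast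
  finally show ?thesis .
qed

lemma hall_to_part:
  assumes H: "\<forall>G\<subseteq>{u\<in>I. card u = d}. card G \<le> card (\<Union>u\<in>G. {w\<in>I. card w = d+1 \<and> u \<subseteq> w})"
  shows "\<exists>Pi. interval_partition I Pi \<and> (\<forall>(u,v)\<in>Pi. d+1 \<le> card v)"
proof -
  define Id where "Id = {u\<in>I. card u = d}"
  define N where "N = (\<lambda>u. {w\<in>I. card w = d+1 \<and> u \<subseteq> w})"
  have "\<exists>f. inj_on f Id \<and> (\<forall>a\<in>Id. f a \<in> N a)"
    apply (rule hall)
    using finI H by (auto simp: Id_def N_def)
  then obtain f where f: "inj_on f Id" "\<forall>a\<in>Id. f a \<in> N a" by blast
  define R where "R = I - Id - f ` Id"
  define Pi where "Pi = (\<lambda>u. (u, f u)) ` Id \<union> (\<lambda>w. (w,w)) ` R"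
  have fu: "f u \<in> I" "card (f u) = d+1" "u \<subseteq> f u" if "u \<in> Id" for u
    using f(2) that by (auto simp: N_def)
  have uI: "u \<in> I" "card u = d" if "u \<in> Id" for u using that by (auto simp: Id_def)
  have int1: "interval I u (f u) = {u, f u}" if u: "u \<in> Id" for u
  proof
    show "interval I u (f u) \<subseteq> {u, f u}"
    proof
      fix w assume w: "w \<in> interval I u (f u)"
      then have wI: "w \<in> I" and uw: "u \<subseteq> w" and wf: "w \<subseteq> f u" by (auto simp: interval_def)
      show "w \<in> {u, f u}"
      proof (cases "w = f u")
        case False
        then have "w \<subset> f u" using wf by auto
        then have "card w < card (f u)" using fin_mem[OF fu(1)[OF u]] psubset_card_mono by blast
        then have "card w \<le> d" using fu(2)[OF u] by simp
        then have "card w = d" using deg wI by force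
        then have "u = w" using deg_eq[OF uI(1)[OF u] wI uw] by simp
        then show ?thesis by simp
      qed simp
    qed
    show "{u, f u} \<subseteq> interval I u (f u)" using fu[OF u] uI[OF u] by (auto simp: interval_def)
  qed
  have int2: "interval I w w = {w}" if "w \<in> R" for w using that by (auto simp: interval_def R_def)
  have notfu: "u' \<noteq> f u" if "u \<in> Id" "u' \<in> Id" for u u' using fu(2)[OF that(1)] uI(2)[OF that(2)] by auto
  have P: "interval_partition I Pi"
    unfolding interval_partition_def
  proof (intro conjI)
    show "finite Pi" unfolding Pi_def R_def Id_def using finI by auto
    show "\<forall>(u,v)\<in>Pi. u \<in> I \<and> v \<in> I \<and> u \<subseteq> v" using fu uI by (auto simp: Pi_def R_def)
    show "\<forall>p\<in>Pi. \<forall>q\<in>Pi. p \<noteq> q \<longrightarrow> interval I (fst p) (snd p) \<inter> interval I (fst q) (snd q) = {}"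
    proof (intro ballI impI)
      fix p q assume p: "p \<in> Pi" and q: "q \<in> Pi" and pq: "p \<noteq> q"
      show "interval I (fst p) (snd p) \<inter> interval I (fst q) (snd q) = {}"
      proof (cases "p \<in> (\<lambda>u. (u, f u)) ` Id")
        case True
        then obtain u where u: "u \<in> Id" "p = (u, f u)" by blast
        show ?thesis
        proof (cases "q \<in> (\<lambda>u. (u, f u)) ` Id")
          case True
          then obtain u' where u': "u' \<in> Id" "q = (u', f u')" by blast
          have "u \<noteq> u'" using pq u u' by auto
          then have "f u \<noteq> f u'" using f(1) u u' by (meson inj_on_contraD)
          then show ?thesis using u u' int1 notfu \<open>u \<noteq> u'\<close> by auto
        next
          case False
          then obtain w where w: "w \<in> R" "q = (w,w)" using q by (auto simp: Pi_def)
          show ?thesis using u w int1 int2 by (auto simp: R_def)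
        qed
      next
        case False
        then obtain w where w: "w \<in> R" "p = (w,w)" using p by (auto simp: Pi_def)
        show ?thesis
        proof (cases "q \<in> (\<lambda>u. (u, f u)) ` Id")
          case True
          then obtain u' where u': "u' \<in> Id" "q = (u', f u')" by blast
          show ?thesis using u' w int1 int2 by (auto simp: R_def)
        next
          case False
          then obtain w' where w': "w' \<in> R" "q = (w',w')" using q by (auto simp: Pi_def)
          show ?thesis using w w' int2 pq by auto
        qed
      qed
    qed
    show "(\<Union>(u,v)\<in>Pi. interval I u v) = I"
    proof
      show "(\<Union>(u,v)\<in>Pi. interval I u v) \<subseteq> I" by (auto simp: interval_def)
      show "I \<subseteq> (\<Union>(u,v)\<in>Pi. interval I u v)"
      proof
        fix w assume w: "w \<in> I"
        show "w \<in> (\<Union>(u,v)\<in>Pi. interval I u v)"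
        proof (cases "w \<in> Id")
          case True
          then have "(w, f w) \<in> Pi" "w \<in> interval I w (f w)" using int1 by (auto simp: Pi_def)
          then show ?thesis by blast
        next
          case False
          show ?thesis
          proof (cases "w \<in> f ` Id")
            case True
            then obtain u where u: "u \<in> Id" "w = f u" by blast
            then have "(u, f u) \<in> Pi" "w \<in> interval I u (f u)" using int1 by (auto simp: Pi_def)
            then show ?thesis by blast
          next
            case False
            then have "w \<in> R" using w \<open>w \<notin> Id\<close> by (auto simp: R_def)
            then have "(w, w) \<in> Pi" "w \<in> interval I w w" using int2 by (auto simp: Pi_def)
            then show ?thesis by blast
          qed
        qed
      qed
    qed
  qed
  have "\<forall>(u,v)\<in>Pi. d+1 \<le> card v"
  proof
    fix p assume p: "p \<in> Pi"
    show "case p of (u,v) \<Rightarrow> d+1 \<le> card v"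
    proof (cases "p \<in> (\<lambda>u. (u, f u)) ` Id")
      case True then show ?thesis using fu by auto
    next
      case False
      then obtain w where w: "w \<in> R" "p = (w,w)" using p by (auto simp: Pi_def)
      then have "w \<in> I" "card w \<noteq> d" by (auto simp: R_def Id_def)
      then have "d+1 \<le> card w" using deg by force
      then show ?thesis using w by simp
    qed
  qed
  then show ?thesis using P by blast
qed

lemma triv_part: "interval_partition I ((\<lambda>u. (u,u)) ` I)"
proof -
  have i: "interval I u u = {u}" if "u \<in> I" for u using that by (auto simp: interval_def)
  show ?thesis unfolding interval_partition_def
  proof (intro conjI)
    show "finite ((\<lambda>u. (u,u)) ` I)" using finI by simp
    show "\<forall>(u,v)\<in>(\<lambda>u. (u,u)) ` I. u \<in> I \<and> v \<in> I \<and> u \<subseteq> v" by auto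
    show "\<forall>p\<in>(\<lambda>u. (u,u)) ` I. \<forall>q\<in>(\<lambda>u. (u,u)) ` I. p \<noteq> q \<longrightarrow>
        interval I (fst p) (snd p) \<inter> interval I (fst q) (snd q) = {}" using i by auto
    show "(\<Union>(u,v)\<in>(\<lambda>u. (u,u)) ` I. interval I u v) = I" using i by auto
  qed
qed

lemma sdepth_ge_iff:
  assumes ne: "I \<noteq> {}"
  shows "k \<le> sdepth I \<longleftrightarrow> (\<exists>Pi. interval_partition I Pi \<and> (\<forall>(u,v)\<in>Pi. k \<le> card v))"
proof -
  define S where "S = {sdepth_partition Pi | Pi. interval_partition I Pi}"
  have "S \<subseteq> sdepth_partition ` Pow (I \<times> I)"
    unfolding S_def interval_partition_def by fastforce
  then have fS: "finite S" using finI by (meson finite_Pow_iff finite_SigmaI finite_imageI finite_subset)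
  have neS: "S \<noteq> {}" using triv_part by (auto simp: S_def)
  have pm: "k \<le> sdepth_partition Pi \<longleftrightarrow> (\<forall>(u,v)\<in>Pi. k \<le> card v)" if P: "interval_partition I Pi" for Pi
  proof -
    have "finite Pi" using P by (simp add: interval_partition_def)
    moreover have "Pi \<noteq> {}" using P ne by (auto simp: interval_partition_def)
    ultimately show ?thesis unfolding sdepth_partition_def by (auto simp: Min_ge_iff)
  qed
  have "k \<le> sdepth I \<longleftrightarrow> (\<exists>a\<in>S. k \<le> a)" unfolding sdepth_def S_def[symmetric] using fS neS by (simp add: Max_ge_iff)
  also have "\<dots> \<longleftrightarrow> (\<exists>Pi. interval_partition I Pi \<and> (\<forall>(u,v)\<in>Pi. k \<le> card v))"
    using pm unfolding S_def by blast
  finally show ?thesis .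
qed

end

theorem corollary4p2:
  fixes n d :: nat and I :: "nat set set"
  assumes "0 < d"
    and "sqf_monomial_ideal n I"
    and "I \<noteq> {}"
    and "\<forall>u\<in>I. d \<le> card u"
    and "rho I d > 0"
  shows "sdepth I = d \<longleftrightarrow>
    (\<exists>G. G \<subseteq> {u \<in> I. card u = d} \<and>
         rho (gen_ideal n G) d > rho (gen_ideal n G) (d + 1))"
proof -
  note id = assms(2) assms(4)
  have ge: "d \<le> sdepth I"
    using sdepth_ge_iff[OF id assms(3), of d] triv_part[OF id] assms(4) by auto
  have "sdepth I = d \<longleftrightarrow> \<not> (d+1 \<le> sdepth I)" using ge by auto
  also have "\<dots> \<longleftrightarrow> \<not> (\<forall>G\<subseteq>{u\<in>I. card u = d}. card G \<le> card (\<Union>u\<in>G. {w\<in>I. card w = d+1 \<and> u \<subseteq> w}))"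
  proof -
    have "(\<exists>Pi. interval_partition I Pi \<and> (\<forall>(u,v)\<in>Pi. d+1 \<le> card v)) \<longleftrightarrow>
      (\<forall>G\<subseteq>{u\<in>I. card u = d}. card G \<le> card (\<Union>u\<in>G. {w\<in>I. card w = d+1 \<and> u \<subseteq> w}))"
    proof
      assume "\<exists>Pi. interval_partition I Pi \<and> (\<forall>(u,v)\<in>Pi. d+1 \<le> card v)"
      then obtain Pi where "interval_partition I Pi" "\<forall>(u,v)\<in>Pi. d+1 \<le> card v" by blast
      then show "\<forall>G\<subseteq>{u\<in>I. card u = d}. card G \<le> card (\<Union>u\<in>G. {w\<in>I. card w = d+1 \<and> u \<subseteq> w})"
        using part_to_hall[OF id] by blast
    next
      assume "\<forall>G\<subseteq>{u\<in>I. card u = d}. card G \<le> card (\<Union>u\<in>G. {w\<in>I. card w = d+1 \<and> u \<subseteq> w})"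
      then show "\<exists>Pi. interval_partition I Pi \<and> (\<forall>(u,v)\<in>Pi. d+1 \<le> card v)"
        by (rule hall_to_part[OF id])
    qed
    then show ?thesis using sdepth_ge_iff[OF id assms(3), of "d+1"] by simp
  qed
  also have "\<dots> \<longleftrightarrow> (\<exists>G. G \<subseteq> {u \<in> I. card u = d} \<and>
         rho (gen_ideal n G) d > rho (gen_ideal n G) (d + 1))"
  proof
    assume "\<not> (\<forall>G\<subseteq>{u\<in>I. card u = d}. card G \<le> card (\<Union>u\<in>G. {w\<in>I. card w = d+1 \<and> u \<subseteq> w}))"
    then obtain G where G: "G \<subseteq> {u\<in>I. card u = d}" "\<not> card G \<le> card (\<Union>u\<in>G. {w\<in>I. card w = d+1 \<and> u \<subseteq> w})"
      by blast
    show "\<exists>G. G \<subseteq> {u \<in> I. card u = d} \<and> rho (gen_ideal n G) d > rho (gen_ideal n G) (d + 1)"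
      apply (rule exI[of _ G])
      using G rho_d_gen[OF id G(1)] rho_d1_gen[OF id G(1)] by simp
  next
    assume "\<exists>G. G \<subseteq> {u \<in> I. card u = d} \<and> rho (gen_ideal n G) d > rho (gen_ideal n G) (d + 1)"
    then obtain G where G: "G \<subseteq> {u\<in>I. card u = d}" "rho (gen_ideal n G) d > rho (gen_ideal n G) (d + 1)"
      by blast
    have "\<not> card G \<le> card (\<Union>u\<in>G. {w\<in>I. card w = d+1 \<and> u \<subseteq> w})"
      using G rho_d_gen[OF id G(1)] rho_d1_gen[OF id G(1)] by simp
    then show "\<not> (\<forall>G\<subseteq>{u\<in>I. card u = d}. card G \<le> card (\<Union>u\<in>G. {w\<in>I. card w = d+1 \<and> u \<subseteq> w}))"
      using G(1) by blast
  qed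
  finally show ?thesis .
qed

end
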